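(* Let $\Bbbk$ be a field of characteristic zero, $\lambda\in\Bbbk^*$, and $s_\lambda=t+\lambda t^{-1}$. Then $$\mathcal O(\lambda)=L(s_\lambda)=\Bbbk[t+\lambda t^{-1}](t^2-\lambda)\partial=\Bbbk[s_\lambda](s_\lambda^2-4\lambda)\partial_{s_\lambda}\cong(t^2-4\lambda)\Bbbk[t]\partial,$$ where the isomorphism is induced by the change of variables $s_\lambda\mapsto t$. Consequently $\mathcal O(\lambda)$ has a basis $\{u^{(\lambda)}_n\mid n\ge1\}$, where $u^{(\lambda)}_n=-s_\lambda^{n-1}(s_\lambda^2-4\lambda)\partial_{s_\lambda}=-(t+\lambda t^{-1})^{n-1}(t^2-\lambda)\partial$, and $[u^{(\lambda)}_n,u^{(\lambda)}_m]=(n-m)(u^{(\lambda)}_{n+m}-4\lambda u^{(\lambda)}_{n+m-2})$ for all $n,m\ge1$.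
   Context: $\mathcal W=\Bbbk[t,t^{-1}]\partial$ with $\partial=d/dt$ is the Witt algebra, $L_n=-t^{n+1}\partial$, $[f\partial,g\partial]=(fg'-f'g)\partial$. For $\lambda\in\Bbbk^*$, $\mathcal O^{(\lambda)}_n=L_n-\lambda^nL_{-n}$ and $\mathcal O(\lambda)=\mathrm{span}\{\mathcal O^{(\lambda)}_n\mid n\ge1\}\subseteq\mathcal W$. For $s\in\Bbbk[t,t^{-1}]$ nonconstant, $\partial_s=\frac{1}{s'}\partial\in\mathrm{Der}(\Bbbk(t))$ (so $\partial_s(s)=1$), $\mathrm{Der}(\Bbbk[s])=\Bbbk[s]\partial_s$, and $L(s)=\mathcal W\cap\mathrm{Der}(\Bbbk[s])$, the intersection taken in $\mathrm{Der}(\Bbbk(t))$. $\Bbbk[t]\partial$ is the one-sided Witt algebra $\mathrm{Der}(\Bbbk[t])$. *)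

theory Defs
  imports "HOL-Computational_Algebra.Formal_Laurent_Series"
begin

text \<open>A derivation g d/dt of k(t) is represented by its coefficient g,
an element of the field of formal Laurent series k((t)) (which contains k(t)).
The Witt algebra W = k[t,t^-1] d/dt is the set of Laurent series with finite support.\<close>

definition laurent_poly :: "'a::field_char_0 fls \<Rightarrow> bool" where
  "laurent_poly f \<longleftrightarrow> finite {n. fls_nth f n \<noteq> 0}"

definition Witt :: "'a::field_char_0 fls set" where
  "Witt = {f. laurent_poly f}"

definition lie :: "'a::field_char_0 fls \<Rightarrow> 'a fls \<Rightarrow> 'a fls" where
  "lie f g = f * fls_deriv g - fls_deriv f * g"

definition peval :: "'a::field_char_0 poly \<Rightarrow> 'a fls \<Rightarrow> 'a fls" where
  "peval p s = poly (map_poly fls_const p) s"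

definition poly_fls :: "'a::field_char_0 poly \<Rightarrow> 'a fls" where
  "poly_fls p = fps_to_fls (fps_of_poly p)"

text \<open>Coefficient of the derivation d_s = (1/s') d/dt.\<close>
definition dcoef :: "'a::field_char_0 fls \<Rightarrow> 'a fls" where
  "dcoef s = 1 / fls_deriv s"

text \<open>Der(k[s]) = k[s] d_s, viewed inside Der(k(t)).\<close>
definition Der_poly :: "'a::field_char_0 fls \<Rightarrow> 'a fls set" where
  "Der_poly s = {peval p s * dcoef s | p. True}"

definition Lsub :: "'a::field_char_0 fls \<Rightarrow> 'a fls set" where
  "Lsub s = Witt \<inter> Der_poly s"

definition Lw :: "int \<Rightarrow> 'a::field_char_0 fls" where
  "Lw n = - fls_X_intpow (n + 1)"

definition Ogen :: "'a::field_char_0 \<Rightarrow> nat \<Rightarrow> 'a fls" where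
  "Ogen lam n = Lw (int n) - fls_const (lam ^ n) * Lw (- int n)"

definition kspan :: "(nat \<Rightarrow> 'a::field_char_0 fls) \<Rightarrow> 'a fls set" where
  "kspan v = {\<Sum>n\<in>S. fls_const (c n) * v n | S c. finite S \<and> 0 \<notin> S}"

definition kindep :: "(nat \<Rightarrow> 'a::field_char_0 fls) \<Rightarrow> bool" where
  "kindep v \<longleftrightarrow> (\<forall>S c. finite S \<and> 0 \<notin> S \<and> (\<Sum>n\<in>S. fls_const (c n) * v n) = 0
                      \<longrightarrow> (\<forall>n\<in>S. c n = 0))"

definition Ocal :: "'a::field_char_0 \<Rightarrow> 'a fls set" where
  "Ocal lam = kspan (Ogen lam)"

definition slam :: "'a::field_char_0 \<Rightarrow> 'a fls" where
  "slam lam = fls_X + fls_const lam * fls_X_inv"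

definition ugen :: "'a::field_char_0 \<Rightarrow> nat \<Rightarrow> 'a fls" where
  "ugen lam n = - (slam lam ^ (n - 1) * (slam lam ^ 2 - fls_const (4 * lam)) * dcoef (slam lam))"

end

theory Submission
  imports Defs
begin

unbundle fps_syntax


lemma peval_pCons: "peval (pCons a p) s = fls_const a + s * peval p s"
  by (simp add: peval_def map_poly_pCons)

lemma peval_0 [simp]: "peval 0 s = 0"
  by (simp add: peval_def)

lemma peval_const [simp]: "peval [:c:] s = fls_const c"
  by (simp add: peval_pCons)

lemma peval_add: "peval (p + q) s = peval p s + peval q s"
proof -
  have "map_poly fls_const (p + q) = map_poly fls_const p + map_poly (fls_const :: 'a \<Rightarrow> 'a fls) q"
    by (intro poly_eqI) (simp add: coeff_map_poly fls_plus_const)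
  thus ?thesis by (simp add: peval_def)
qed

lemma peval_smult: "peval (smult c p) s = fls_const c * peval p s"
  by (simp add: peval_def map_poly_smult)

lemma peval_mult: "peval (p * q) s = peval p s * peval q s"
proof (induct p rule: pCons_induct)
  case 0 then show ?case by simp
next
  case (pCons a p)
  have "pCons a p * q = smult a q + pCons 0 (p * q)" by simp
  then show ?case using pCons
    by (simp only: peval_add peval_smult peval_pCons) (simp add: algebra_simps)
qed

lemma peval_uminus: "peval (- p) s = - peval p s"
  using peval_smult[of "-1" p s] by simp

lemma peval_diff: "peval (p - q) s = peval p s - peval q s"
  using peval_add[of p "-q" s] by (simp add: peval_uminus)

lemma peval_X: "peval [:0, 1:] s = s"
  by (simp add: peval_pCons)

lemma peval_monom: "peval (monom c n) s = fls_const c * s ^ n"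
  by (simp add: peval_def map_poly_monom poly_monom)

lemma peval_deriv: "fls_deriv (peval p s) = peval (pderiv p) s * fls_deriv s"
proof (induct p rule: pCons_induct)
  case 0 then show ?case by simp
next
  case (pCons a p)
  show ?case using pCons
    by (simp add: peval_pCons pderiv_pCons peval_add algebra_simps)
qed



abbreviation XI :: "int \<Rightarrow> 'a::field_char_0 fls" where "XI i \<equiv> fls_X_intpow i"

lemma XI_mult: "(XI i :: 'a::field_char_0 fls) * XI j = XI (i + j)"
  by (rule fls_X_intpow_times_fls_X_intpow)

lemma slam_XI: "slam lam = XI 1 + fls_const lam * XI (-1)"
  by (simp add: slam_def fls_X_conv_shift_1 fls_X_inv_conv_shift_1)

lemma Ogen_XI: "Ogen lam n = - XI (int n + 1) + fls_const (lam ^ n) * XI (1 - int n)"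
  by (simp add: Ogen_def Lw_def)

lemma Ogen_0 [simp]: "Ogen lam 0 = 0"
  by (simp add: Ogen_XI)

lemma Ogen_rec_Suc:
  "slam lam * Ogen lam (Suc k) = Ogen lam (Suc k + 1) + fls_const lam * Ogen lam k"
proof -
  have l: "slam lam * Ogen lam (Suc k) = - (XI 1 * XI (int k + 2)) + fls_const lam * fls_const lam ^ k * (XI 1 * XI (- int k))
       - fls_const lam * (XI (-1) * XI (int k + 2)) + fls_const lam * fls_const lam * fls_const lam ^ k * (XI (-1) * XI (- int k))"
    by (simp add: slam_XI Ogen_XI algebra_simps fls_const_power fls_const_mult_const[symmetric] del: fls_const_mult_const)
  have r: "Ogen lam (Suc k + 1) + fls_const lam * Ogen lam k =
     - XI (int k + 3) + fls_const lam * fls_const lam * fls_const lam ^ k * XI (- int k - 1)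
     - fls_const lam * XI (int k + 1) + fls_const lam * fls_const lam ^ k * XI (1 - int k)"
    by (simp add: Ogen_XI algebra_simps fls_const_power fls_const_mult_const[symmetric] del: fls_const_mult_const)
  show ?thesis unfolding l r XI_mult by (simp add: algebra_simps del: fls_const_mult_const)
qed

lemma Ogen_rec:
  assumes "n \<ge> 1"
  shows "slam lam * Ogen lam n = Ogen lam (n + 1) + fls_const lam * Ogen lam (n - 1)"
  using Ogen_rec_Suc[of lam "n - 1"] assms by simp

definition Tl :: "'a::field_char_0 \<Rightarrow> 'a fls" where "Tl lam = fls_X ^ 2 - fls_const lam"

lemma Ogen_1: "Ogen lam 1 = - Tl lam"
  by (simp add: Ogen_XI Tl_def fls_X_conv_shift_1 power2_eq_square fls_shifted_times_simps)



definition wl :: "'a::field_char_0 \<Rightarrow> 'a fls" where "wl lam = fls_X - fls_const lam * fls_X_inv"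

lemma Xinv: "fls_X_inv = inverse (fls_X :: 'a::field_char_0 fls)"
  by (simp add: fls_inverse_X)

lemma XXinv: "fls_X * fls_X_inv = (1 :: 'a::field_char_0 fls)"
  by (simp add: Xinv)

lemma Tl_nz: "lam \<noteq> 0 \<Longrightarrow> Tl lam \<noteq> 0"
proof
  assume "lam \<noteq> 0" "Tl lam = 0"
  hence "fls_nth (Tl lam) 0 = 0" by simp
  moreover have "fls_nth (Tl lam) 0 = - lam"
    by (simp add: Tl_def power2_eq_square fls_X_conv_shift_1 fls_shifted_times_simps)
  ultimately show False using \<open>lam \<noteq> 0\<close> by simp
qed

lemma Tl_w: "Tl lam = fls_X * wl lam"
proof -
  have "fls_X * wl lam = fls_X * fls_X - fls_const lam * (fls_X * fls_X_inv)"
    unfolding wl_def by (simp only: right_diff_distrib mult.left_commute)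
  thus ?thesis by (simp add: Tl_def XXinv power2_eq_square)
qed

lemma w_nz: "lam \<noteq> 0 \<Longrightarrow> wl lam \<noteq> 0"
proof
  assume "lam \<noteq> 0" "wl lam = 0"
  hence "Tl lam = 0" by (simp add: Tl_w)
  with Tl_nz[OF \<open>lam \<noteq> 0\<close>] show False by simp
qed

lemma deriv_s: "fls_X * fls_deriv (slam lam) = wl lam"
proof -
  have "fls_deriv (slam lam) = 1 - fls_const lam * (fls_X_inv * fls_X_inv)"
    by (simp add: slam_def power2_eq_square)
  hence "fls_X * fls_deriv (slam lam) = fls_X - fls_const lam * ((fls_X * fls_X_inv) * fls_X_inv)"
    by (simp only: right_diff_distrib mult.left_commute mult.assoc mult_1_right)
  thus ?thesis by (simp add: wl_def XXinv)
qed

lemma ring_aux: "(a::'b::comm_ring_1) * b = 1 \<Longrightarrow> (a + c * b)^2 - 4 * c = (a - c * b)^2"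
proof -
  assume h: "a * b = 1"
  have "(a + c * b)^2 - (a - c * b)^2 = 4 * c * (a * b)" by (simp add: power2_eq_square algebra_simps)
  thus ?thesis using h by (simp add: algebra_simps)
qed

lemma Q_w: "slam lam ^ 2 - fls_const (4 * lam) = wl lam ^ 2"
proof -
  have "fls_const (4 * lam) = 4 * fls_const lam"
    by (simp flip: fls_const_mult_const)
  thus ?thesis unfolding slam_def wl_def using ring_aux[OF XXinv, of "fls_const lam"] by simp
qed

lemma field_aux: "(x::'b::field) * d = w \<Longrightarrow> x \<noteq> 0 \<Longrightarrow> 1 / d = x / w"
  by (metis div_by_1 divide_divide_eq_right mult.commute nonzero_divide_mult_cancel_left)

lemma D_eq: "dcoef (slam lam) = fls_X / wl lam"
  unfolding dcoef_def by (rule field_aux[OF deriv_s]) simp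

lemma QD: "lam \<noteq> 0 \<Longrightarrow> (slam lam ^ 2 - fls_const (4 * lam)) * dcoef (slam lam) = Tl lam"
  unfolding Q_w D_eq Tl_w using w_nz[of lam] by (simp add: power2_eq_square)

lemma DT: "lam \<noteq> 0 \<Longrightarrow> dcoef (slam lam) * Tl lam = fls_X ^ 2"
  unfolding D_eq Tl_w using w_nz[of lam] by (simp add: power2_eq_square)

lemma derivD: "lam \<noteq> 0 \<Longrightarrow> fls_deriv (slam lam) * dcoef (slam lam) = 1"
proof -
  assume l: "lam \<noteq> 0"
  have "fls_deriv (slam lam) \<noteq> 0" using deriv_s[of lam] w_nz[OF l] by auto
  thus ?thesis by (simp add: dcoef_def)
qed

lemma D_nz: "lam \<noteq> 0 \<Longrightarrow> dcoef (slam lam) \<noteq> 0"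
  using derivD by force



lemma Ogen_Suc0 [simp]: "Ogen lam (Suc 0) = - Tl lam"
  using Ogen_1 by simp

lemma kspanI: "finite S \<Longrightarrow> 0 \<notin> S \<Longrightarrow> f = (\<Sum>n\<in>S. fls_const (c n) * v n) \<Longrightarrow> f \<in> kspan v"
  unfolding kspan_def by (rule CollectI, rule exI[of _ S], rule exI[of _ c]) simp

lemma kspan_0: "0 \<in> kspan v"
proof -
  have "0 = (\<Sum>n\<in>{}. fls_const (0::'a) * v n)" by simp
  thus ?thesis by (intro kspanI[of "{}"]) auto
qed

lemma kspan_gen: "n \<ge> 1 \<Longrightarrow> v n \<in> kspan v"
proof -
  assume "n \<ge> 1"
  have "v n = (\<Sum>k\<in>{n}. fls_const ((\<lambda>_. 1::'a) k) * v k)" by simp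
  moreover have "finite {n}" "0 \<notin> {n}" using \<open>n \<ge> 1\<close> by auto
  ultimately show ?thesis by (intro kspanI[of "{n}" _ "\<lambda>_. 1"]) auto
qed

lemma kspan_add:
  assumes "f \<in> kspan v" "g \<in> kspan v" shows "f + g \<in> kspan v"
proof -
  obtain S c where S: "finite S" "0 \<notin> S" "f = (\<Sum>n\<in>S. fls_const (c n) * v n)"
    using assms(1) unfolding kspan_def by blast
  obtain S' c' where S': "finite S'" "0 \<notin> S'" "g = (\<Sum>n\<in>S'. fls_const (c' n) * v n)"
    using assms(2) unfolding kspan_def by blast
  define d where "d n = (if n \<in> S then c n else 0) + (if n \<in> S' then c' n else 0)" for n
  have fin: "finite (S \<union> S')" using S S' by simp
  have "f = (\<Sum>n\<in>S \<union> S'. fls_const (if n \<in> S then c n else 0) * v n)"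
    unfolding S(3) using fin by (intro sum.mono_neutral_cong_left) auto
  moreover have "g = (\<Sum>n\<in>S \<union> S'. fls_const (if n \<in> S' then c' n else 0) * v n)"
    unfolding S'(3) using fin by (intro sum.mono_neutral_cong_left) auto
  ultimately have "f + g = (\<Sum>n\<in>S \<union> S'. fls_const (d n) * v n)"
    by (simp add: d_def sum.distrib distrib_right flip: fls_plus_const)
  thus ?thesis using fin S S' by (intro kspanI[of "S \<union> S'" _ d]) auto
qed

lemma kspan_smult:
  assumes "f \<in> kspan v" shows "fls_const a * f \<in> kspan v"
proof -
  obtain S c where S: "finite S" "0 \<notin> S" "f = (\<Sum>n\<in>S. fls_const (c n) * v n)"
    using assms(1) unfolding kspan_def by blast
  have "fls_const a * f = (\<Sum>n\<in>S. fls_const (a * c n) * v n)"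
    unfolding S(3) by (simp add: sum_distrib_left flip: mult.assoc)
  thus ?thesis using S by (intro kspanI[of S _ "\<lambda>n. a * c n"]) auto
qed

lemma kspan_sum:
  assumes "finite S" "\<And>n. n \<in> S \<Longrightarrow> g n \<in> kspan v"
  shows "(\<Sum>n\<in>S. fls_const (c n) * g n) \<in> kspan v"
  using assms by (induct S rule: finite_induct) (auto intro: kspan_0 kspan_add kspan_smult)

lemma kspan_subset:
  assumes "0 \<in> W" "\<And>f g. f \<in> W \<Longrightarrow> g \<in> W \<Longrightarrow> f + g \<in> W"
    "\<And>a f. f \<in> W \<Longrightarrow> fls_const a * f \<in> W" "\<And>n. n \<ge> 1 \<Longrightarrow> v n \<in> W"
  shows "kspan v \<subseteq> W"
proof
  fix f assume "f \<in> kspan v"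
  then obtain S c where S: "finite S" "0 \<notin> S" "f = (\<Sum>n\<in>S. fls_const (c n) * v n)"
    unfolding kspan_def by blast
  have "\<forall>n\<in>S. v n \<in> W" using S(2) assms(4) by (metis less_one not_le)
  with S(1) have "(\<Sum>n\<in>S. fls_const (c n) * v n) \<in> W"
    by (induct S rule: finite_induct) (auto intro: assms)
  thus "f \<in> W" using S by simp
qed

definition Pset :: "'a::field_char_0 \<Rightarrow> 'a fls set" where
  "Pset lam = {peval p (slam lam) * Tl lam | p. True}"

lemma PsetI: "f = peval p (slam lam) * Tl lam \<Longrightarrow> f \<in> Pset lam"
  unfolding Pset_def by blast

lemma PsetE: "f \<in> Pset lam \<Longrightarrow> (\<And>p. f = peval p (slam lam) * Tl lam \<Longrightarrow> P) \<Longrightarrow> P"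
  unfolding Pset_def by blast

lemma Pset_0: "0 \<in> Pset lam"
  by (rule PsetI[of _ 0]) simp

lemma Pset_add: "f \<in> Pset lam \<Longrightarrow> g \<in> Pset lam \<Longrightarrow> f + g \<in> Pset lam"
proof (elim PsetE)
  fix p q assume "f = peval p (slam lam) * Tl lam" "g = peval q (slam lam) * Tl lam"
  thus ?thesis by (intro PsetI[of _ "p + q"]) (simp add: peval_add distrib_right)
qed

lemma Pset_smult: "f \<in> Pset lam \<Longrightarrow> fls_const a * f \<in> Pset lam"
proof (elim PsetE)
  fix p assume "f = peval p (slam lam) * Tl lam"
  thus ?thesis by (intro PsetI[of _ "smult a p"]) (simp add: peval_smult mult.assoc)
qed

lemma Pset_s: "f \<in> Pset lam \<Longrightarrow> slam lam * f \<in> Pset lam"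
proof (elim PsetE)
  fix p assume "f = peval p (slam lam) * Tl lam"
  thus ?thesis by (intro PsetI[of _ "[:0,1:] * p"]) (simp add: peval_pCons mult.assoc)
qed

lemma Pset_diff: "f \<in> Pset lam \<Longrightarrow> g \<in> Pset lam \<Longrightarrow> f - g \<in> Pset lam"
  using Pset_add[of f lam "fls_const (-1) * g"] Pset_smult[of g lam "-1"] by simp

lemma Ogen_Pset: "Ogen lam n \<in> Pset lam \<and> Ogen lam (Suc n) \<in> Pset lam"
proof (induct n)
  case 0
  have "Ogen lam 1 = peval [:-1:] (slam lam) * Tl lam" by (simp add: Ogen_1)
  then show ?case using Pset_0 PsetI[of "Ogen lam 1" "[:-1:]"] by auto
next
  case (Suc n)
  have "Ogen lam (Suc (Suc n)) = slam lam * Ogen lam (Suc n) - fls_const lam * Ogen lam n"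
    using Ogen_rec_Suc[of lam n] by simp
  then show ?case using Suc Pset_s Pset_smult Pset_diff by metis
qed

lemma kspan_s: "f \<in> Ocal lam \<Longrightarrow> slam lam * f \<in> Ocal lam"
proof -
  assume "f \<in> Ocal lam"
  then obtain S c where S: "finite S" "0 \<notin> S" "f = (\<Sum>n\<in>S. fls_const (c n) * Ogen lam n)"
    unfolding Ocal_def kspan_def by blast
  have "slam lam * f = (\<Sum>n\<in>S. fls_const (c n) * (slam lam * Ogen lam n))"
    unfolding S(3) by (simp add: sum_distrib_left mult.left_commute)
  moreover have "slam lam * Ogen lam n \<in> kspan (Ogen lam)" if "n \<in> S" for n
  proof -
    have n: "n \<ge> 1" using that S(2) by (metis less_one not_le)
    have "Ogen lam (n - 1) \<in> kspan (Ogen lam)"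
    proof (cases "n = 1")
      case True thus ?thesis using kspan_0[of "Ogen lam"] by simp
    next
      case False thus ?thesis using n kspan_gen[of "n - 1" "Ogen lam"] by simp
    qed
    thus ?thesis unfolding Ogen_rec[OF n] using kspan_gen[of "n+1" "Ogen lam"]
      by (intro kspan_add kspan_smult) auto
  qed
  ultimately show ?thesis unfolding Ocal_def
    using kspan_sum[OF S(1), of "\<lambda>n. slam lam * Ogen lam n" "Ogen lam" c] by simp
qed

lemma Ocal_Pset: "Ocal lam = Pset lam"
proof
  show "Ocal lam \<subseteq> Pset lam" unfolding Ocal_def
  proof (rule kspan_subset)
    show "0 \<in> Pset lam" by (rule Pset_0)
    show "f + g \<in> Pset lam" if "f \<in> Pset lam" "g \<in> Pset lam" for f g using that by (rule Pset_add)
    show "fls_const a * f \<in> Pset lam" if "f \<in> Pset lam" for a f using that by (rule Pset_smult)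
    show "Ogen lam n \<in> Pset lam" for n using Ogen_Pset[of lam n] by (rule conjunct1)
  qed
next
  show "Pset lam \<subseteq> Ocal lam"
  proof
    fix f assume "f \<in> Pset lam"
    then obtain p where f: "f = peval p (slam lam) * Tl lam" unfolding Pset_def by blast
    have "peval p (slam lam) * Tl lam \<in> Ocal lam"
    proof (induct p rule: pCons_induct)
      case 0 then show ?case by (simp add: Ocal_def kspan_0)
    next
      case (pCons a p)
      have "peval (pCons a p) (slam lam) * Tl lam =
          fls_const (-a) * Ogen lam 1 + slam lam * (peval p (slam lam) * Tl lam)"
        by (simp add: peval_pCons Ogen_1 algebra_simps)
      moreover have "fls_const (-a) * Ogen lam 1 \<in> Ocal lam"
        unfolding Ocal_def by (rule kspan_smult, rule kspan_gen) simp
      moreover have "slam lam * (peval p (slam lam) * Tl lam) \<in> Ocal lam"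
        by (rule kspan_s[OF pCons(2)])
      ultimately show ?case unfolding Ocal_def by (simp add: kspan_add)
    qed
    thus "f \<in> Ocal lam" using f by simp
  qed
qed



lemma lp_0: "laurent_poly (0::'a::field_char_0 fls)"
  by (simp add: laurent_poly_def)

lemma lp_add: "laurent_poly f \<Longrightarrow> laurent_poly g \<Longrightarrow> laurent_poly (f + g)"
  unfolding laurent_poly_def
  by (rule finite_subset[of _ "{n. f $$ n \<noteq> 0} \<union> {n. g $$ n \<noteq> 0}"]) auto

lemma lp_smult: "laurent_poly f \<Longrightarrow> laurent_poly (fls_const a * f)"
  unfolding laurent_poly_def
  by (rule finite_subset[of _ "{n. f $$ n \<noteq> 0}"]) auto

lemma lp_uminus: "laurent_poly f \<Longrightarrow> laurent_poly (- f)"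
  unfolding laurent_poly_def by simp

lemma lp_diff: "laurent_poly f \<Longrightarrow> laurent_poly g \<Longrightarrow> laurent_poly (f - g)"
proof -
  assume a: "laurent_poly f" "laurent_poly g"
  have "laurent_poly (f + - g)" by (rule lp_add[OF a(1) lp_uminus[OF a(2)]])
  thus ?thesis by simp
qed

lemma lp_XI: "laurent_poly (fls_shift k 1 :: 'a::field_char_0 fls)"
  unfolding laurent_poly_def by (rule finite_subset[of _ "{-k}"]) auto

lemma Ocal_Witt: "Ocal lam \<subseteq> Witt"
  unfolding Ocal_def Witt_def
  by (rule kspan_subset) (auto simp: Ogen_XI intro!: lp_0 lp_add lp_smult lp_diff lp_uminus lp_XI)

lemma peval_lead:
  assumes lam: "lam \<noteq> 0" and p: "p \<noteq> 0"
  shows "(\<forall>n < - int (degree p). peval p (slam lam) $$ n = 0) \<and>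
         peval p (slam lam) $$ (- int (degree p)) = lead_coeff p * lam ^ degree p"
  using p
proof (induct p rule: pCons_induct)
  case 0 then show ?case by simp
next
  case (pCons a p)
  have sP: "(slam lam * f) $$ n = f $$ (n - 1) + lam * f $$ (n + 1)" for f :: "'a fls" and n
    unfolding slam_def distrib_right mult.assoc fls_X_times_conv_shift(1) fls_X_inv_times_conv_shift(1)
    by simp
  show ?case
  proof (cases "p = 0")
    case True
    then show ?thesis using pCons by (simp add: peval_pCons)
  next
    case False
    note IH = pCons(2)[OF False]
    have dg: "degree (pCons a p) = Suc (degree p)" using False by simp
    have lc: "lead_coeff (pCons a p) = lead_coeff p" using False by simp
    show ?thesis unfolding dg lc
      using IH by (auto simp: peval_pCons sP algebra_simps)
  qed
qed

lemma peval_inj0: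
  assumes "lam \<noteq> 0" "peval p (slam lam) = 0" shows "p = 0"
proof (rule ccontr)
  assume "p \<noteq> 0"
  from peval_lead[OF assms(1) this] assms(2) have "lead_coeff p * lam ^ degree p = 0" by simp
  with \<open>p \<noteq> 0\<close> assms(1) show False by simp
qed

lemma peval_inj:
  assumes "lam \<noteq> 0" "peval p (slam lam) = peval q (slam lam)" shows "p = q"
  using peval_inj0[OF assms(1), of "p - q"] assms(2) by (simp add: peval_diff)

lemma coeff_argument:
  fixes g :: "'a::field_char_0 fls"
  assumes lam: "lam \<noteq> 0" and lp: "laurent_poly g"
    and eq: "g * Tl lam = fls_const a * fls_X ^ 3 + fls_const b * fls_X ^ 2 + fls_const (a * lam) * fls_X"
  shows "a = 0 \<and> b = 0"
proof -
  have cT: "(g * Tl lam) $$ n = g $$ (n - 2) - lam * g $$ n" for n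
    by (simp add: Tl_def right_diff_distrib fls_X_power_times_conv_shift)
  have cR: "(g * Tl lam) $$ n = (if n = 3 then a else 0) + (if n = 2 then b else 0) + (if n = 1 then a * lam else 0)" for n
    unfolding eq by (simp add: fls_X_power_nth[of 1, simplified])
  have fin: "finite {n. g $$ n \<noteq> 0}" using lp unfolding laurent_poly_def .
  have up: "g $$ n = 0" if "n > 1" for n
  proof (rule ccontr)
    assume "g $$ n \<noteq> 0"
    define B where "B = {n. g $$ n \<noteq> 0 \<and> n > 1}"
    have fB: "finite B" using fin unfolding B_def by (rule finite_subset[rotated]) auto
    have nB: "n \<in> B" using that \<open>g $$ n \<noteq> 0\<close> by (simp add: B_def)
    define M where "M = Max B"
    have MB: "M \<in> B" using fB nB unfolding M_def by (intro Max_in) auto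
    have "g $$ (M + 2) = 0"
    proof (rule ccontr)
      assume "g $$ (M + 2) \<noteq> 0"
      hence "M + 2 \<in> B" using MB by (simp add: B_def)
      hence "M + 2 \<le> M" using fB unfolding M_def by (rule Max_ge[rotated])
      thus False by simp
    qed
    moreover have "M > 1" "g $$ M \<noteq> 0" using MB by (auto simp: B_def)
    ultimately show False using cT[of "M + 2"] cR[of "M + 2"] by simp
  qed
  have down: "g $$ n = 0" if "n < 1" for n
  proof (rule ccontr)
    assume "g $$ n \<noteq> 0"
    define B where "B = {n. g $$ n \<noteq> 0 \<and> n < 1}"
    have fB: "finite B" using fin unfolding B_def by (rule finite_subset[rotated]) auto
    have nB: "n \<in> B" using that \<open>g $$ n \<noteq> 0\<close> by (simp add: B_def)
    define m where "m = Min B"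
    have mB: "m \<in> B" using fB nB unfolding m_def by (intro Min_in) auto
    have "g $$ (m - 2) = 0"
    proof (rule ccontr)
      assume "g $$ (m - 2) \<noteq> 0"
      hence "m - 2 \<in> B" using mB by (simp add: B_def)
      hence "m \<le> m - 2" using fB unfolding m_def by (rule Min_le[rotated])
      thus False by simp
    qed
    moreover have "m < 1" "g $$ m \<noteq> 0" using mB by (auto simp: B_def)
    ultimately show False using cT[of m] cR[of m] lam by simp
  qed
  have a1: "g $$ 1 = a" using cT[of 3] cR[of 3] up[of 3] by simp
  have "b = 0" using cT[of 2] cR[of 2] up[of 2] down[of 0] by simp
  moreover have "- lam * g $$ 1 = a * lam" using cT[of 1] cR[of 1] down[of "-1"] by simp
  hence "a = 0" using a1 lam by (simp add: algebra_simps) 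
  ultimately show ?thesis by simp
qed



abbreviation mm :: "'a::field_char_0 \<Rightarrow> 'a poly" where "mm lam \<equiv> [:- 4 * lam, 0, 1:]"

lemma peval_mm: "peval (mm lam) (slam lam) = slam lam ^ 2 - fls_const (4 * lam)"
  by (simp add: peval_pCons power2_eq_square)

definition Ephi :: "'a::field_char_0 \<Rightarrow> 'a poly \<Rightarrow> 'a fls" where
  "Ephi lam r = peval r (slam lam) * dcoef (slam lam)"

lemma E_mm: "lam \<noteq> 0 \<Longrightarrow> Ephi lam (p * mm lam) = peval p (slam lam) * Tl lam"
  unfolding Ephi_def peval_mult peval_mm mult.assoc QD by simp

lemma ring_aux2: "(v::'b::comm_ring_1) * u = 1 \<Longrightarrow> (b + (u + l * v) * a) * u^2 = a * u^3 + b * u^2 + (a * l) * u"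
proof -
  assume h: "v * u = 1"
  have "(b + (u + l * v) * a) * u^2 = a * u^3 + b * u^2 + (a * l) * (v * u) * u"
    by (simp add: algebra_simps power2_eq_square power3_eq_cube)
  thus ?thesis using h by simp
qed

lemma Lsub_Pset:
  assumes lam: "lam \<noteq> 0"
  shows "Lsub (slam lam) = Pset lam"
proof
  show "Pset lam \<subseteq> Lsub (slam lam)"
  proof
    fix f assume f: "f \<in> Pset lam"
    then obtain p where p: "f = peval p (slam lam) * Tl lam" by (elim PsetE)
    have "f \<in> Witt" using f Ocal_Witt Ocal_Pset by blast
    moreover have "f = peval (p * mm lam) (slam lam) * dcoef (slam lam)"
      using E_mm[OF lam, of p] p by (simp add: Ephi_def)
    hence "f \<in> Der_poly (slam lam)" unfolding Der_poly_def by blast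
    ultimately show "f \<in> Lsub (slam lam)" by (simp add: Lsub_def)
  qed
next
  show "Lsub (slam lam) \<subseteq> Pset lam"
  proof
    fix f assume f: "f \<in> Lsub (slam lam)"
    hence W: "laurent_poly f" by (simp add: Lsub_def Witt_def)
    from f obtain p where p: "f = peval p (slam lam) * dcoef (slam lam)"
      by (auto simp: Lsub_def Der_poly_def)
    define q where "q = p div mm lam"
    define r where "r = p mod mm lam"
    have pqr: "p = q * mm lam + r" unfolding q_def r_def by (rule div_mult_mod_eq[symmetric])
    have mnz: "mm lam \<noteq> 0" by simp
    have "degree r \<le> 1"
      using degree_mod_less[OF mnz, of p] unfolding r_def by auto
    hence r2: "r = [:coeff r 0, coeff r 1:]"
      by (intro poly_eqI) (auto simp: coeff_pCons coeff_eq_0 split: nat.splits)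
    define a where "a = coeff r 1"
    define b where "b = coeff r 0"
    have fe: "f = peval q (slam lam) * Tl lam + peval r (slam lam) * dcoef (slam lam)"
      unfolding p pqr peval_add distrib_right using E_mm[OF lam, of q] by (simp add: Ephi_def)
    define g where "g = peval r (slam lam) * dcoef (slam lam)"
    have qW: "laurent_poly (peval q (slam lam) * Tl lam)"
      using Ocal_Witt[of lam] Ocal_Pset[of lam] PsetI[of _ q lam] by (auto simp: Witt_def)
    have gW: "laurent_poly g"
      using lp_diff[OF W qW] fe unfolding g_def by simp
    have pr: "peval r (slam lam) = fls_const b + (fls_X + fls_const lam * fls_X_inv) * fls_const a"
      by (subst r2) (simp add: peval_pCons a_def b_def slam_def)
    have "g * Tl lam = peval r (slam lam) * fls_X ^ 2"
      unfolding g_def mult.assoc DT[OF lam] ..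
    also have "\<dots> = fls_const a * fls_X ^ 3 + fls_const b * fls_X ^ 2 + fls_const (a * lam) * fls_X"
      unfolding pr using ring_aux2[of "fls_X_inv" "fls_X" "fls_const b" "fls_const lam" "fls_const a"]
      by (simp add: XXinv mult.commute)
    finally have "a = 0 \<and> b = 0" by (rule coeff_argument[OF lam gW])
    hence "r = 0" using r2 a_def b_def by simp
    hence "f = peval q (slam lam) * Tl lam" using fe by simp
    thus "f \<in> Pset lam" by (rule PsetI)
  qed
qed



lemma Ephi_inj: "lam \<noteq> 0 \<Longrightarrow> Ephi lam r = Ephi lam r' \<Longrightarrow> r = r'"
  unfolding Ephi_def using D_nz[of lam] peval_inj[of lam r r'] by simp

definition Phi :: "'a::field_char_0 \<Rightarrow> 'a fls \<Rightarrow> 'a fls" where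
  "Phi lam f = poly_fls (SOME r. f = Ephi lam r)"

lemma Phi_E: "lam \<noteq> 0 \<Longrightarrow> Phi lam (Ephi lam r) = poly_fls r"
proof -
  assume lam: "lam \<noteq> 0"
  have "Ephi lam r = Ephi lam (SOME r'. Ephi lam r = Ephi lam r')" by (rule someI) (rule refl)
  hence "(SOME r'. Ephi lam r = Ephi lam r') = r" using Ephi_inj[OF lam] by metis
  thus ?thesis by (simp add: Phi_def)
qed

lemma Ephi_add: "Ephi lam (p + q) = Ephi lam p + Ephi lam q"
  by (simp add: Ephi_def peval_add distrib_right)

lemma Ephi_diff: "Ephi lam (p - q) = Ephi lam p - Ephi lam q"
  by (simp add: Ephi_def peval_diff left_diff_distrib)

lemma Ephi_smult: "Ephi lam (smult c p) = fls_const c * Ephi lam p"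
  by (simp add: Ephi_def peval_smult mult.assoc)

lemma Ephi_uminus: "Ephi lam (- p) = - Ephi lam p"
  by (simp add: Ephi_def peval_uminus)

lemma lie_E:
  assumes lam: "lam \<noteq> 0"
  shows "lie (Ephi lam p) (Ephi lam q) = Ephi lam (p * pderiv q - pderiv p * q)"
proof -
  have d: "fls_deriv (Ephi lam r) = peval r (slam lam) * fls_deriv (dcoef (slam lam)) + peval (pderiv r) (slam lam)" for r
    using derivD[OF lam] by (simp add: Ephi_def peval_deriv mult.assoc)
  show ?thesis unfolding lie_def d
    by (simp add: Ephi_def peval_diff peval_mult algebra_simps)
qed

lemma poly_fls_add: "poly_fls (p + q) = poly_fls p + poly_fls q"
  by (simp add: poly_fls_def fps_of_poly_add)
lemma poly_fls_diff: "poly_fls (p - q) = poly_fls p - poly_fls q"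
  by (simp add: poly_fls_def fps_of_poly_diff)
lemma poly_fls_mult: "poly_fls (p * q) = poly_fls p * poly_fls q"
  by (simp add: poly_fls_def fps_of_poly_mult fls_times_fps_to_fls)
lemma poly_fls_smult: "poly_fls (smult c p) = fls_const c * poly_fls p"
  by (simp add: poly_fls_def fps_of_poly_smult fls_times_fps_to_fls)
lemma poly_fls_deriv: "fls_deriv (poly_fls p) = poly_fls (pderiv p)"
  by (simp add: poly_fls_def fls_deriv_fps_to_fls fps_of_poly_pderiv)
lemma poly_fls_inj: "poly_fls p = poly_fls q \<Longrightarrow> p = q"
  by (simp add: poly_fls_def fps_of_poly_eq_iff)

lemma lie_poly: "lie (poly_fls p) (poly_fls q) = poly_fls (p * pderiv q - pderiv p * q)"
  by (simp add: lie_def poly_fls_deriv poly_fls_diff poly_fls_mult)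

lemma Ocal_E: "lam \<noteq> 0 \<Longrightarrow> Ocal lam = {Ephi lam (p * mm lam) | p. True}"
  unfolding Ocal_Pset Pset_def using E_mm by metis

lemma Phi_props:
  assumes lam: "lam \<noteq> 0"
  shows "bij_betw (Phi lam) (Ocal lam) {poly_fls (p * mm lam) | p. True}
           \<and> (\<forall>f\<in>Ocal lam. \<forall>g\<in>Ocal lam. Phi lam (f + g) = Phi lam f + Phi lam g)
           \<and> (\<forall>c. \<forall>f\<in>Ocal lam. Phi lam (fls_const c * f) = fls_const c * Phi lam f)
           \<and> (\<forall>f\<in>Ocal lam. \<forall>g\<in>Ocal lam. Phi lam (lie f g) = lie (Phi lam f) (Phi lam g))
           \<and> (\<forall>p. Phi lam (peval p (slam lam) * (slam lam ^ 2 - fls_const (4 * lam)) * dcoef (slam lam))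
                   = poly_fls (p * mm lam))"
proof (intro conjI allI ballI)
  note OE = Ocal_E[OF lam]
  show "bij_betw (Phi lam) (Ocal lam) {poly_fls (p * mm lam) | p. True}"
  proof (rule bij_betw_imageI)
    show "inj_on (Phi lam) (Ocal lam)"
    proof (rule inj_onI)
      fix f g assume "f \<in> Ocal lam" "g \<in> Ocal lam" "Phi lam f = Phi lam g"
      then obtain p q where "f = Ephi lam (p * mm lam)" "g = Ephi lam (q * mm lam)"
        "Phi lam f = Phi lam g" unfolding OE by blast
      thus "f = g" using Phi_E[OF lam] poly_fls_inj by metis
    qed
    have "Ocal lam = (\<lambda>p. Ephi lam (p * mm lam)) ` UNIV" unfolding OE by blast
    hence "Phi lam ` Ocal lam = (\<lambda>p. poly_fls (p * mm lam)) ` UNIV"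
      by (simp only: image_image Phi_E[OF lam])
    thus "Phi lam ` Ocal lam = {poly_fls (p * mm lam) | p. True}" by blast
  qed
next
  fix f g assume "f \<in> Ocal lam" "g \<in> Ocal lam"
  then obtain p q where f: "f = Ephi lam (p * mm lam)" and g: "g = Ephi lam (q * mm lam)"
    unfolding Ocal_E[OF lam] by blast
  show "Phi lam (f + g) = Phi lam f + Phi lam g"
    unfolding f g Ephi_add[symmetric] Phi_E[OF lam] poly_fls_add ..
  show "Phi lam (lie f g) = lie (Phi lam f) (Phi lam g)"
    unfolding f g lie_E[OF lam] Phi_E[OF lam] lie_poly ..
next
  fix c f assume "f \<in> Ocal lam"
  then obtain p where f: "f = Ephi lam (p * mm lam)"
    unfolding Ocal_E[OF lam] by blast
  show "Phi lam (fls_const c * f) = fls_const c * Phi lam f"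
    unfolding f Ephi_smult[symmetric] Phi_E[OF lam] poly_fls_smult ..
next
  fix p
  have "peval p (slam lam) * (slam lam ^ 2 - fls_const (4 * lam)) * dcoef (slam lam) = Ephi lam (p * mm lam)"
    by (simp only: Ephi_def peval_mult peval_mm)
  thus "Phi lam (peval p (slam lam) * (slam lam ^ 2 - fls_const (4 * lam)) * dcoef (slam lam))
                   = poly_fls (p * mm lam)" using Phi_E[OF lam] by simp
qed

lemma ugen_E: "ugen lam n = - Ephi lam (monom 1 (n - 1) * mm lam)"
  unfolding ugen_def Ephi_def peval_mult peval_mm peval_monom by (simp add: mult.assoc)

lemma ugen_T: "lam \<noteq> 0 \<Longrightarrow> ugen lam n = - (slam lam ^ (n - 1) * Tl lam)"
  by (simp add: ugen_def mult.assoc QD)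

lemma peval_sum: "finite S \<Longrightarrow> peval (\<Sum>n\<in>S. f n) s = (\<Sum>n\<in>S. peval (f n) s)"
  by (induct S rule: finite_induct) (simp_all add: peval_add)

lemma kindep_ugen:
  assumes lam: "lam \<noteq> 0" shows "kindep (ugen lam)"
  unfolding kindep_def
proof (intro allI impI ballI)
  fix S c n assume h: "finite S \<and> 0 \<notin> S \<and> (\<Sum>n\<in>S. fls_const (c n) * ugen lam n) = 0" and n: "n \<in> S"
  define P where "P = (\<Sum>k\<in>S. monom (c k) (k - 1))"
  have "(\<Sum>n\<in>S. fls_const (c n) * ugen lam n) = - (peval P (slam lam) * Tl lam)"
    using h by (simp add: P_def ugen_T[OF lam] peval_sum peval_monom sum_distrib_right
        sum_negf mult.assoc)
  hence "peval P (slam lam) * Tl lam = 0" using h by simp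
  hence "P = 0" using Tl_nz[OF lam] peval_inj0[OF lam] by simp
  hence "coeff P (n - 1) = 0" by simp
  moreover have "coeff P (n - 1) = (\<Sum>k\<in>S. if k = n then c k else 0)"
    unfolding P_def coeff_sum coeff_monom
  proof (rule sum.cong[OF refl])
    fix k assume "k \<in> S"
    have k0: "k \<noteq> 0" using \<open>k \<in> S\<close> h by metis
    have n0: "n \<noteq> 0" using n h by metis
    have "(k - 1 = n - 1) = (k = n)" using k0 n0 by arith
    thus "(if k - 1 = n - 1 then c k else 0) = (if k = n then c k else 0)" by simp
  qed
  moreover have "(\<Sum>k\<in>S. if k = n then c k else 0) = c n" using h n by simp
  ultimately show "c n = 0" by simp
qed

lemma kspan_ugen: "lam \<noteq> 0 \<Longrightarrow> kspan (ugen lam) = Pset lam"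
proof
  assume lam: "lam \<noteq> 0"
  show "kspan (ugen lam) \<subseteq> Pset lam"
  proof (rule kspan_subset)
    show "0 \<in> Pset lam" by (rule Pset_0)
    show "f + g \<in> Pset lam" if "f \<in> Pset lam" "g \<in> Pset lam" for f g using that by (rule Pset_add)
    show "fls_const a * f \<in> Pset lam" if "f \<in> Pset lam" for a f using that by (rule Pset_smult)
    show "ugen lam n \<in> Pset lam" for n
      by (rule PsetI[of _ "monom (-1) (n - 1)"]) (simp add: ugen_T[OF lam] peval_monom)
  qed
next
  assume lam: "lam \<noteq> 0"
  show "Pset lam \<subseteq> kspan (ugen lam)"
  proof
    fix f assume "f \<in> Pset lam"
    then obtain p where f: "f = peval p (slam lam) * Tl lam" by (elim PsetE)
    have "f = (\<Sum>k\<le>degree p. fls_const (- coeff p k) * ugen lam (Suc k))"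
    proof -
      have "f = peval (\<Sum>k\<le>degree p. monom (coeff p k) k) (slam lam) * Tl lam"
        unfolding poly_as_sum_of_monoms f ..
      thus ?thesis by (simp add: peval_sum peval_monom sum_distrib_right ugen_T[OF lam] mult.assoc)
    qed
    also have "\<dots> = (\<Sum>n\<in>Suc ` {..degree p}. fls_const (- coeff p (n - 1)) * ugen lam n)"
      by (subst sum.reindex) auto
    finally show "f \<in> kspan (ugen lam)" by (rule kspanI[rotated 2]) auto
  qed
qed

lemma x_pderiv_monom: "monom 1 1 * pderiv (monom (1::'a::field_char_0) i) = smult (of_nat i) (monom 1 i)"
  by (cases i) (simp_all add: pderiv_monom mult_monom smult_monom)

lemma poly_bracket:
  fixes M :: "'a::field_char_0 poly"
  assumes "i + j \<ge> 1"
  shows "(monom 1 i * M) * pderiv (monom 1 j * M) - pderiv (monom 1 i * M) * (monom 1 j * M)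
       = smult (of_nat j - of_nat i) (monom 1 (i + j - 1) * M ^ 2)"
proof -
  have x: "monom 1 1 \<noteq> (0::'a poly)" by simp
  have di: "monom 1 1 * pderiv (monom 1 k * M) = smult (of_nat k) (monom 1 k) * M + monom 1 1 * monom 1 k * pderiv M" for k
  proof -
    have "monom 1 1 * pderiv (monom 1 k * M) = monom 1 1 * monom 1 k * pderiv M + M * (monom 1 1 * pderiv (monom 1 k))"
      by (simp only: pderiv_mult distrib_left ac_simps)
    thus ?thesis unfolding x_pderiv_monom by (simp add: ac_simps)
  qed
  have "monom 1 1 * ((monom 1 i * M) * pderiv (monom 1 j * M) - pderiv (monom 1 i * M) * (monom 1 j * M))
      = (monom 1 i * M) * (monom 1 1 * pderiv (monom 1 j * M)) - (monom 1 1 * pderiv (monom 1 i * M)) * (monom 1 j * M)"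
    by (simp add: algebra_simps)
  also have "\<dots> = smult (of_nat j - of_nat i) (monom 1 i * monom 1 j * M ^ 2)"
    unfolding di by (simp add: algebra_simps smult_diff_left power2_eq_square)
  also have "\<dots> = monom 1 1 * smult (of_nat j - of_nat i) (monom 1 (i + j - 1) * M ^ 2)"
  proof -
    have s: "Suc (i + j - Suc 0) = i + j" using assms by simp
    show ?thesis by (simp add: mult_monom mult.assoc[symmetric] s)
  qed
  finally show ?thesis by (rule mult_left_cancel[OF x, THEN iffD1])
qed



lemma mm_eq: "mm lam = monom 1 2 - [:4 * lam:]"
proof -
  have "monom (1::'a) 2 = [:0, 0, 1:]"
    by (rule poly_eqI) (simp add: coeff_pCons split: nat.split)
  thus ?thesis by simp
qed

lemma gen1: "(Y::'a::field poly) = M + [:c:] \<Longrightarrow> smult c (X * M) - (X * Y) * M = - (X * M^2)"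
  by (simp add: algebra_simps power2_eq_square)

lemma lie_neg: "lie (- f) (- g) = lie f g"
  by (simp add: lie_def)

lemma lie_self: "lie f f = 0"
  by (simp add: lie_def mult.commute)

lemma bracket:
  assumes lam: "lam \<noteq> 0" and n: "n \<ge> 1" and m: "m \<ge> 1"
  shows "lie (ugen lam n) (ugen lam m)
           = (of_int (int n - int m)) * (ugen lam (n + m) - fls_const (4 * lam) * ugen lam (n + m - 2))"
proof (cases "n = m")
  case True
  then show ?thesis by (simp add: lie_self)
next
  case False
  define k where "k = n + m - 3"
  have k1: "n - 1 + (m - 1) - 1 = k" and k2: "n + m - 1 = k + 2" and k3: "n + m - 2 - 1 = k"
    using n m False by (auto simp: k_def)
  have ij: "n - 1 + (m - 1) \<ge> 1" using n m False by auto
  have LHS: "lie (ugen lam n) (ugen lam m)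
      = Ephi lam (smult (of_nat (m - 1) - of_nat (n - 1)) (monom 1 k * mm lam ^ 2))"
    unfolding ugen_E lie_neg lie_E[OF lam] poly_bracket[OF ij] k1 ..
  have z: "of_nat (m - 1) - of_nat (n - 1) = - (of_int (int n - int m) :: 'a)"
    using n m by (simp add: of_nat_diff)
  have "smult (4 * lam) (monom 1 k * mm lam) - monom 1 (k + 2) * mm lam = - (monom 1 k * mm lam ^ 2)"
  proof -
    have "monom 1 (k + 2) = monom 1 k * (monom 1 2 :: 'a poly)" by (simp add: mult_monom)
    moreover have "monom 1 2 = mm lam + [:4 * lam:]" unfolding mm_eq by simp
    ultimately show ?thesis using gen1[of "monom 1 2" "mm lam" "4 * lam" "monom 1 k"] by simp
  qed
  moreover
  {
    define C where "C = monom 1 (k + 2) * mm lam"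
    define C' where "C' = monom 1 k * mm lam"
    have "ugen lam (n + m) - fls_const (4 * lam) * ugen lam (n + m - 2)
        = fls_const (4 * lam) * Ephi lam C' - Ephi lam C"
      unfolding ugen_E k2 k3 C_def[symmetric] C'_def[symmetric] by (simp add: algebra_simps)
    also have "\<dots> = Ephi lam (smult (4 * lam) C' - C)" by (simp only: Ephi_diff Ephi_smult)
    finally have "ugen lam (n + m) - fls_const (4 * lam) * ugen lam (n + m - 2)
        = Ephi lam (smult (4 * lam) (monom 1 k * mm lam) - monom 1 (k + 2) * mm lam)"
      unfolding C_def C'_def .
  }
  ultimately have RHS: "ugen lam (n + m) - fls_const (4 * lam) * ugen lam (n + m - 2)
      = Ephi lam (- (monom 1 k * mm lam ^ 2))" by simp
  show ?thesis unfolding LHS RHS z fls_of_int Ephi_smult[symmetric]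
    by (simp only: smult_minus_left smult_minus_right)
qed

theorem theorem4p16:
  fixes lam :: "'a::field_char_0"
  assumes "lam \<noteq> 0"
  shows
    "Ocal lam = Lsub (slam lam)
     \<and> Lsub (slam lam) = {peval p (slam lam) * (fls_X ^ 2 - fls_const lam) | p. True}
     \<and> {peval p (slam lam) * (fls_X ^ 2 - fls_const lam) | p. True}
         = {peval p (slam lam) * (slam lam ^ 2 - fls_const (4 * lam)) * dcoef (slam lam) | p. True}
     \<and> (\<exists>\<Phi>. bij_betw \<Phi> (Ocal lam) {poly_fls (p * [:- 4 * lam, 0, 1:]) | p. True}
           \<and> (\<forall>f\<in>Ocal lam. \<forall>g\<in>Ocal lam. \<Phi> (f + g) = \<Phi> f + \<Phi> g)
           \<and> (\<forall>c. \<forall>f\<in>Ocal lam. \<Phi> (fls_const c * f) = fls_const c * \<Phi> f)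
           \<and> (\<forall>f\<in>Ocal lam. \<forall>g\<in>Ocal lam. \<Phi> (lie f g) = lie (\<Phi> f) (\<Phi> g))
           \<and> (\<forall>p. \<Phi> (peval p (slam lam) * (slam lam ^ 2 - fls_const (4 * lam)) * dcoef (slam lam))
                   = poly_fls (p * [:- 4 * lam, 0, 1:])))
     \<and> (\<forall>n\<ge>1. ugen lam n = - (slam lam ^ (n - 1) * (fls_X ^ 2 - fls_const lam)))
     \<and> kindep (ugen lam) \<and> Ocal lam = kspan (ugen lam)
     \<and> (\<forall>n\<ge>1. \<forall>m\<ge>1. lie (ugen lam n) (ugen lam m)
           = (of_int (int n - int m)) * (ugen lam (n + m) - fls_const (4 * lam) * ugen lam (n + m - 2)))"
proof (intro conjI)
  note lam = assms
  show "Ocal lam = Lsub (slam lam)" using Ocal_Pset Lsub_Pset[OF lam] by simp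
  show "Lsub (slam lam) = {peval p (slam lam) * (fls_X ^ 2 - fls_const lam) | p. True}"
    unfolding Lsub_Pset[OF lam] Pset_def Tl_def ..
  have e: "peval p (slam lam) * (slam lam ^ 2 - fls_const (4 * lam)) * dcoef (slam lam)
      = peval p (slam lam) * (fls_X ^ 2 - fls_const lam)" for p
    by (simp only: mult.assoc QD[OF lam] Tl_def)
  show "{peval p (slam lam) * (fls_X ^ 2 - fls_const lam) | p. True}
         = {peval p (slam lam) * (slam lam ^ 2 - fls_const (4 * lam)) * dcoef (slam lam) | p. True}"
    by (simp only: e)
  show "\<exists>\<Phi>. bij_betw \<Phi> (Ocal lam) {poly_fls (p * [:- 4 * lam, 0, 1:]) | p. True}
           \<and> (\<forall>f\<in>Ocal lam. \<forall>g\<in>Ocal lam. \<Phi> (f + g) = \<Phi> f + \<Phi> g)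
           \<and> (\<forall>c. \<forall>f\<in>Ocal lam. \<Phi> (fls_const c * f) = fls_const c * \<Phi> f)
           \<and> (\<forall>f\<in>Ocal lam. \<forall>g\<in>Ocal lam. \<Phi> (lie f g) = lie (\<Phi> f) (\<Phi> g))
           \<and> (\<forall>p. \<Phi> (peval p (slam lam) * (slam lam ^ 2 - fls_const (4 * lam)) * dcoef (slam lam))
                   = poly_fls (p * [:- 4 * lam, 0, 1:]))"
    by (rule exI[of _ "Phi lam"], rule Phi_props[OF lam])
  show "\<forall>n\<ge>1. ugen lam n = - (slam lam ^ (n - 1) * (fls_X ^ 2 - fls_const lam))"
    using ugen_T[OF lam] by (simp add: Tl_def)
  show "kindep (ugen lam)" by (rule kindep_ugen[OF lam])
  show "Ocal lam = kspan (ugen lam)" using Ocal_Pset kspan_ugen[OF lam] by simp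
  show "\<forall>n\<ge>1. \<forall>m\<ge>1. lie (ugen lam n) (ugen lam m)
           = (of_int (int n - int m)) * (ugen lam (n + m) - fls_const (4 * lam) * ugen lam (n + m - 2))"
    using bracket[OF lam] by blast
qed


end
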